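(* Let $V$ be a bounded operator on $H^2$. Then $V$ is a Toeplitz operator if and only if the Sarason Sub-Symbol $R_f$ of $V$ is independent of the choice of $f\in H^2\setminus\{0\}$, i.e. $R_f=R_g$ for all nonzero $f,g\in H^2$.
   Context: $H^2=H^2(\mathbb{T})$ is the Hardy space, viewed as the closed subspace of $L^2(\mathbb{T})$ spanned by $\{e^{in\theta}\}_{n\ge0}$; $z=e^{i\theta}$ on the circle; $S=M_z$ is the shift. A bounded operator $V$ on $H^2$ is Toeplitz if $S^*VS=V$, equivalently $V=P M_\phi$ for some $\phi\in L^\infty(\mathbb{T})$, where $P$ is the orthogonal projection $L^2(\mathbb{T})\to H^2$ and $M_\phi f=\phi f$. For an operator $T$ with shift-invariant domain $D(T)$ and $f\in D(T)\setminus\{0\}$, the Sarason Sub-Symbol corresponding to $f$ is $R_f=h_f/f$, where $h_f=\sum_{n=1}^\infty \langle T(z^nf),1\rangle e^{-in\theta}+\sum_{n=0}^\infty\langle Tf,z^n\rangle e^{in\theta}$, the series being interpreted as a (formal) trigonometric series convergent in some sense. *)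

theory Defs
  imports "HOL-Analysis.Analysis"
begin

text \<open>Model of the Hardy space H^2 via its (unitarily equivalent) Fourier-coefficient
  picture: f in H^2 is identified with its coefficient sequence (f n = inner f z^n),
  and H^2 is the space of square-summable sequences indexed by nat.\<close>

definition H2 :: "(nat \<Rightarrow> complex) set" where
  "H2 = {a. summable (\<lambda>n. (cmod (a n))\<^sup>2)}"

definition h2_norm :: "(nat \<Rightarrow> complex) \<Rightarrow> real" where
  "h2_norm a = sqrt (\<Sum>n. (cmod (a n))\<^sup>2)"

definition shift :: "(nat \<Rightarrow> complex) \<Rightarrow> (nat \<Rightarrow> complex)" where
  "shift a = (\<lambda>n. if n = 0 then 0 else a (n - 1))"

definition shift_adj :: "(nat \<Rightarrow> complex) \<Rightarrow> (nat \<Rightarrow> complex)" where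
  "shift_adj a = (\<lambda>n. a (Suc n))"

text \<open>Bounded (linear) operators on H^2; values outside H^2 are irrelevant.\<close>
definition bounded_op_H2 :: "((nat \<Rightarrow> complex) \<Rightarrow> (nat \<Rightarrow> complex)) \<Rightarrow> bool" where
  "bounded_op_H2 V \<longleftrightarrow>
     (\<forall>a\<in>H2. V a \<in> H2) \<and>
     (\<forall>a\<in>H2. \<forall>b\<in>H2. V (\<lambda>n. a n + b n) = (\<lambda>n. V a n + V b n)) \<and>
     (\<forall>c. \<forall>a\<in>H2. V (\<lambda>n. c * a n) = (\<lambda>n. c * V a n)) \<and>
     (\<exists>C. \<forall>a\<in>H2. h2_norm (V a) \<le> C * h2_norm a)"

definition toeplitz :: "((nat \<Rightarrow> complex) \<Rightarrow> (nat \<Rightarrow> complex)) \<Rightarrow> bool" where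
  "toeplitz V \<longleftrightarrow> (\<forall>a\<in>H2. shift_adj (V (shift a)) = V a)"

text \<open>The formal trigonometric series h_f, as its two-sided coefficient sequence:
  coefficient at -n (n >= 1) is inner (V (z^n f)) 1, coefficient at n >= 0 is inner (V f) z^n.\<close>
definition h_ser :: "((nat \<Rightarrow> complex) \<Rightarrow> (nat \<Rightarrow> complex)) \<Rightarrow> (nat \<Rightarrow> complex) \<Rightarrow> int \<Rightarrow> complex" where
  "h_ser V f k = (if 0 \<le> k then V f (nat k) else V ((shift ^^ nat (- k)) f) 0)"

text \<open>Formal (Cauchy/convolution) product of a two-sided series with a one-sided
  (analytic) series, coefficient n: sum over m of h(n-m) g(m).\<close>
definition conv_coeff :: "(int \<Rightarrow> complex) \<Rightarrow> (nat \<Rightarrow> complex) \<Rightarrow> int \<Rightarrow> complex" where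
  "conv_coeff h g n = (\<Sum>m. h (n - int m) * g m)"

definition conv_ok :: "(int \<Rightarrow> complex) \<Rightarrow> (nat \<Rightarrow> complex) \<Rightarrow> int \<Rightarrow> bool" where
  "conv_ok h g n \<longleftrightarrow> summable (\<lambda>m. cmod (h (n - int m) * g m))"

text \<open>R_f = R_g, i.e. h_f / f = h_g / g, read as the (convergent) cross-multiplied
  identity h_f * g = h_g * f of formal trigonometric series.\<close>
definition sub_symbol_eq :: "((nat \<Rightarrow> complex) \<Rightarrow> (nat \<Rightarrow> complex)) \<Rightarrow> (nat \<Rightarrow> complex) \<Rightarrow> (nat \<Rightarrow> complex) \<Rightarrow> bool" where
  "sub_symbol_eq V f g \<longleftrightarrow>
     (\<forall>n. conv_ok (h_ser V f) g n \<and> conv_ok (h_ser V g) f n \<and>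
          conv_coeff (h_ser V f) g n = conv_coeff (h_ser V g) f n)"

end

theory Submission
  imports Defs
begin

definition N2 :: "(nat \<Rightarrow> complex) \<Rightarrow> real" where
  "N2 a = (\<Sum>n. (cmod (a n))\<^sup>2)"

definition ee :: "nat \<Rightarrow> nat \<Rightarrow> complex" where
  "ee j = (\<lambda>n. if n = j then 1 else 0)"

definition trunc :: "nat \<Rightarrow> (nat \<Rightarrow> complex) \<Rightarrow> nat \<Rightarrow> complex" where
  "trunc M a = (\<lambda>n. if n < M then a n else 0)"

lemma H2_iff: "a \<in> H2 \<longleftrightarrow> summable (\<lambda>n. (cmod (a n))\<^sup>2)"
  by (simp add: H2_def)

lemma N2_nonneg: "a \<in> H2 \<Longrightarrow> 0 \<le> N2 a"
  unfolding N2_def H2_iff by (intro suminf_nonneg) auto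

lemma sq_tri: "(cmod (x + y))\<^sup>2 \<le> 2 * (cmod x)\<^sup>2 + 2 * (cmod y)\<^sup>2"
proof -
  have "cmod (x+y) \<le> cmod x + cmod y" by (rule norm_triangle_ineq)
  then have "(cmod (x+y))\<^sup>2 \<le> (cmod x + cmod y)\<^sup>2"
    by (intro power_mono) auto
  also have "\<dots> \<le> 2 * (cmod x)\<^sup>2 + 2 * (cmod y)\<^sup>2"
    by (smt (verit) sum_squares_ge_zero power2_diff power2_sum zero_le_power2)
  finally show ?thesis .
qed

lemma H2_add: "a \<in> H2 \<Longrightarrow> b \<in> H2 \<Longrightarrow> (\<lambda>n. a n + b n) \<in> H2"
  unfolding H2_iff
  apply (rule summable_comparison_test'[where g="\<lambda>n. 2 * (cmod (a n))\<^sup>2 + 2 * (cmod (b n))\<^sup>2" and N=0])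
   apply (intro summable_add summable_mult; assumption)
  using sq_tri by simp

lemma H2_scal: "a \<in> H2 \<Longrightarrow> (\<lambda>n. c * a n) \<in> H2"
  unfolding H2_iff by (simp add: norm_mult power_mult_distrib summable_mult)

lemma H2_diff: "a \<in> H2 \<Longrightarrow> b \<in> H2 \<Longrightarrow> (\<lambda>n. a n - b n) \<in> H2"
  using H2_add[of a "\<lambda>n. (-1) * b n"] H2_scal[of b "-1"] by simp

lemma H2_zero: "(\<lambda>_. 0) \<in> H2"
  unfolding H2_iff by simp

lemma H2_finite: "finite S \<Longrightarrow> (\<And>n. n \<notin> S \<Longrightarrow> a n = 0) \<Longrightarrow> a \<in> H2"
  unfolding H2_iff
  by (rule summable_finite[of S]) auto

lemma H2_trunc: "trunc M a \<in> H2"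
  by (rule H2_finite[of "{..<M}"]) (auto simp: trunc_def)

lemma H2_ee: "ee j \<in> H2"
  by (rule H2_finite[of "{j}"]) (auto simp: ee_def)

lemma shift_sq: "(\<lambda>n. (cmod (shift a n))\<^sup>2) = (\<lambda>n. if n = 0 then 0 else (cmod (a (n - 1)))\<^sup>2)"
  by (auto simp: shift_def)

lemma H2_shift_N2:
  assumes "a \<in> H2" shows "shift a \<in> H2" "N2 (shift a) = N2 a"
proof -
  have s: "(\<lambda>n. (cmod (a n))\<^sup>2) sums N2 a" using assms unfolding H2_iff N2_def
    by (simp add: summable_sums)
  have "(\<lambda>n. (cmod (shift a (Suc n)))\<^sup>2) sums N2 a" using s by (simp add: shift_def)
  then have "(\<lambda>n. (cmod (shift a n))\<^sup>2) sums N2 a"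
    using sums_Suc_iff[of "\<lambda>n. (cmod (shift a n))\<^sup>2"] by (simp add: shift_def)
  then show "shift a \<in> H2" "N2 (shift a) = N2 a"
    unfolding H2_iff N2_def by (auto simp: sums_iff)
qed

lemma H2_shiftp: "a \<in> H2 \<Longrightarrow> (shift ^^ p) a \<in> H2 \<and> N2 ((shift ^^ p) a) = N2 a"
  by (induction p) (auto simp: H2_shift_N2)

lemma shiftp_add: "(shift ^^ p) (\<lambda>n. a n + b n) = (\<lambda>n. (shift ^^ p) a n + (shift ^^ p) b n)"
  by (induction p) (auto simp: shift_def)

lemma shiftp_scal: "(shift ^^ p) (\<lambda>n. c * a n) = (\<lambda>n. c * (shift ^^ p) a n)"
  by (induction p) (auto simp: shift_def)

lemma shift_ee: "shift (ee j) = ee (Suc j)"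
  by (rule ext) (auto simp: shift_def ee_def)

lemma shiftp_ee: "(shift ^^ p) (ee j) = ee (j + p)"
  by (induction p) (auto simp: shift_ee)

lemma coord_le_N2: "a \<in> H2 \<Longrightarrow> (cmod (a k))\<^sup>2 \<le> N2 a"
  unfolding N2_def H2_iff
  using sum_le_suminf[of "\<lambda>n. (cmod (a n))\<^sup>2" "{k}"] by auto

lemma partial_le_N2: "a \<in> H2 \<Longrightarrow> finite S \<Longrightarrow> (\<Sum>n\<in>S. (cmod (a n))\<^sup>2) \<le> N2 a"
  unfolding N2_def H2_iff
  using sum_le_suminf[of "\<lambda>n. (cmod (a n))\<^sup>2" S] by auto

lemma N2_tail: assumes "a \<in> H2" shows "(\<lambda>M. N2 (\<lambda>n. a n - trunc M a n)) \<longlonglongrightarrow> 0"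
proof -
  let ?x = "\<lambda>n. (cmod (a n))\<^sup>2"
  have sx: "summable ?x" using assms H2_iff by auto
  have eq: "N2 (\<lambda>n. a n - trunc M a n) = N2 a - (\<Sum>i<M. ?x i)" for M
  proof -
    have "(\<lambda>n. (cmod (a n - trunc M a n))\<^sup>2) = (\<lambda>n. ?x n - (if n < M then ?x n else 0))"
      by (auto simp: trunc_def)
    moreover have "summable (\<lambda>n. if n < M then ?x n else 0)"
      by (rule summable_finite[of "{..<M}"]) auto
    moreover have "(\<Sum>n. if n < M then ?x n else 0) = (\<Sum>i<M. ?x i)"
      by (subst suminf_finite[of "{..<M}"]) auto
    moreover have "(\<Sum>n. ?x n - (if n < M then ?x n else 0)) = (\<Sum>n. ?x n) - (\<Sum>n. (if n < M then ?x n else 0))"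
      by (rule suminf_diff[symmetric]) (fact sx, fact)
    ultimately show ?thesis unfolding N2_def by simp
  qed
  have "(\<lambda>M. \<Sum>i<M. ?x i) \<longlonglongrightarrow> N2 a" unfolding N2_def using sx by (rule summable_LIMSEQ)
  then have "(\<lambda>M. N2 a - (\<Sum>i<M. ?x i)) \<longlonglongrightarrow> N2 a - N2 a" by (intro tendsto_intros)
  then show ?thesis by (simp add: eq)
qed

lemma sq_bound_tendsto:
  fixes X :: "nat \<Rightarrow> complex"
  assumes "\<And>N. (cmod (X N - L))\<^sup>2 \<le> c * e N" "e \<longlonglongrightarrow> 0" "c \<ge> 0"
  shows "X \<longlonglongrightarrow> L"
proof -
  have "(\<lambda>N. sqrt (c * e N)) \<longlonglongrightarrow> sqrt (c * 0)" by (intro tendsto_intros assms)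
  then have t: "(\<lambda>N. sqrt (c * e N)) \<longlonglongrightarrow> 0" by simp
  have "norm (X N - L) \<le> sqrt (c * e N)" for N
    using assms(1)[of N] by (metis norm_ge_zero real_le_rsqrt)
  then have "(\<lambda>N. X N - L) \<longlonglongrightarrow> 0"
    by (intro Lim_null_comparison[OF _ t]) auto
  then show ?thesis by (simp add: LIM_zero_iff)
qed


lemma shiftp_diff: "(shift ^^ p) (\<lambda>n. a n - b n) = (\<lambda>n. (shift ^^ p) a n - (shift ^^ p) b n)"
  by (induction p) (auto simp: shift_def)

lemma shift_trunc: "shift (trunc M a) = trunc (Suc M) (shift a)"
  by (rule ext) (auto simp: shift_def trunc_def)

lemma trunc_Suc: "trunc (Suc M) a = (\<lambda>n. trunc M a n + a M * ee M n)"
  by (rule ext) (auto simp: trunc_def ee_def less_Suc_eq)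

lemma CS:
  fixes x y :: "nat \<Rightarrow> complex"
  assumes sx: "summable (\<lambda>m. (cmod (x m))\<^sup>2)" and sy: "summable (\<lambda>m. (cmod (y m))\<^sup>2)"
  shows "summable (\<lambda>m. cmod (x m * y m))"
    "(cmod (\<Sum>m. x m * y m))\<^sup>2 \<le> (\<Sum>m. (cmod (x m))\<^sup>2) * (\<Sum>m. (cmod (y m))\<^sup>2)"
proof -
  have le: "cmod (x m * y m) \<le> (cmod (x m))\<^sup>2 + (cmod (y m))\<^sup>2" for m
  proof -
    have "2 * (cmod (x m) * cmod (y m)) \<le> (cmod (x m))\<^sup>2 + (cmod (y m))\<^sup>2"
      using sum_squares_bound[of "cmod (x m)" "cmod (y m)"] by (simp add: mult.assoc)
    moreover have "0 \<le> cmod (x m) * cmod (y m)" by simp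
    ultimately have "cmod (x m) * cmod (y m) \<le> (cmod (x m))\<^sup>2 + (cmod (y m))\<^sup>2" by linarith
    then show ?thesis by (simp add: norm_mult)
  qed
  show s: "summable (\<lambda>m. cmod (x m * y m))"
    by (rule summable_comparison_test'[OF summable_add[OF sx sy], of 0]) (use le in auto)
  let ?X = "\<Sum>m. (cmod (x m))\<^sup>2" and ?Y = "\<Sum>m. (cmod (y m))\<^sup>2"
  have "(\<Sum>m. cmod (x m * y m)) \<le> sqrt ?X * sqrt ?Y"
  proof (rule suminf_le_const[OF s])
    fix M
    have "(\<Sum>m<M. cmod (x m * y m)) = (\<Sum>m<M. \<bar>cmod (x m)\<bar> * \<bar>cmod (y m)\<bar>)"
      by (simp add: norm_mult)
    also have "\<dots> \<le> L2_set (\<lambda>m. cmod (x m)) {..<M} * L2_set (\<lambda>m. cmod (y m)) {..<M}"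
      by (rule L2_set_mult_ineq)
    also have "\<dots> \<le> sqrt ?X * sqrt ?Y"
    proof (intro mult_mono)
      show "L2_set (\<lambda>m. cmod (x m)) {..<M} \<le> sqrt ?X"
        unfolding L2_set_def by (intro real_sqrt_le_mono sum_le_suminf[OF sx]) auto
      show "L2_set (\<lambda>m. cmod (y m)) {..<M} \<le> sqrt ?Y"
        unfolding L2_set_def by (intro real_sqrt_le_mono sum_le_suminf[OF sy]) auto
    qed (auto simp: L2_set_def intro: suminf_nonneg[OF sx] sum_nonneg)
    finally show "(\<Sum>m<M. cmod (x m * y m)) \<le> sqrt ?X * sqrt ?Y" .
  qed
  moreover have "cmod (\<Sum>m. x m * y m) \<le> (\<Sum>m. cmod (x m * y m))"
    by (rule summable_norm[OF s])
  ultimately have "cmod (\<Sum>m. x m * y m) \<le> sqrt ?X * sqrt ?Y" by linarith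
  then have "(cmod (\<Sum>m. x m * y m))\<^sup>2 \<le> (sqrt ?X * sqrt ?Y)\<^sup>2"
    by (intro power_mono) auto
  also have "\<dots> = ?X * ?Y"
    using suminf_nonneg[OF sx] suminf_nonneg[OF sy] by (simp add: power_mult_distrib)
  finally show "(cmod (\<Sum>m. x m * y m))\<^sup>2 \<le> ?X * ?Y" .
qed

locale bop =
  fixes V :: "(nat \<Rightarrow> complex) \<Rightarrow> (nat \<Rightarrow> complex)" and K :: real
  assumes VH2: "a \<in> H2 \<Longrightarrow> V a \<in> H2"
    and Vadd: "a \<in> H2 \<Longrightarrow> b \<in> H2 \<Longrightarrow> V (\<lambda>n. a n + b n) = (\<lambda>n. V a n + V b n)"
    and Vscal: "a \<in> H2 \<Longrightarrow> V (\<lambda>n. c * a n) = (\<lambda>n. c * V a n)"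
    and Vbd: "a \<in> H2 \<Longrightarrow> N2 (V a) \<le> K * N2 a"
    and Kpos: "K \<ge> 0"
begin

lemma Vdiff: assumes "a \<in> H2" "b \<in> H2" shows "V (\<lambda>n. a n - b n) = (\<lambda>n. V a n - V b n)"
proof -
  have "V (\<lambda>n. a n - b n) = V (\<lambda>n. a n + (\<lambda>n. (-1) * b n) n)" by simp
  also have "\<dots> = (\<lambda>n. V a n + V (\<lambda>n. (-1) * b n) n)"
    by (rule Vadd) (use assms H2_scal[OF assms(2), of "-1"] in simp_all)
  also have "\<dots> = (\<lambda>n. V a n - V b n)" using Vscal[OF assms(2), of "-1"] by simp
  finally show ?thesis .
qed

lemma Vzero: "V (\<lambda>_. 0) = (\<lambda>_. 0)"
  using Vscal[OF H2_zero, of 0] by simp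

lemma coord_cont: assumes "a \<in> H2" "b \<in> H2"
  shows "(cmod (V a k - V b k))\<^sup>2 \<le> K * N2 (\<lambda>n. a n - b n)"
proof -
  have "(cmod (V a k - V b k))\<^sup>2 = (cmod (V (\<lambda>n. a n - b n) k))\<^sup>2" using Vdiff[OF assms] by simp
  also have "\<dots> \<le> N2 (V (\<lambda>n. a n - b n))" by (rule coord_le_N2[OF VH2[OF H2_diff[OF assms]]])
  also have "\<dots> \<le> K * N2 (\<lambda>n. a n - b n)" by (rule Vbd[OF H2_diff[OF assms]])
  finally show ?thesis .
qed

lemma V_trunc: "V (trunc M a) i = (\<Sum>j<M. a j * V (ee j) i)"
proof (induction M)
  case 0
  have "trunc 0 a = (\<lambda>_. 0)" by (simp add: trunc_def)
  then show ?case by (simp add: Vzero)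
next
  case (Suc M)
  have "V (trunc (Suc M) a) = V (\<lambda>n. trunc M a n + (\<lambda>n. a M * ee M n) n)" by (simp add: trunc_Suc)
  also have "\<dots> = (\<lambda>n. V (trunc M a) n + a M * V (ee M) n)"
    by (subst Vadd) (auto intro: H2_trunc H2_scal H2_ee simp: Vscal[OF H2_ee])
  finally show ?case using Suc by simp
qed

lemma V_trunc_lim: assumes "a \<in> H2" shows "(\<lambda>M. V (trunc M a) i) \<longlonglongrightarrow> V a i"
proof (rule sq_bound_tendsto[OF _ N2_tail[OF assms] Kpos])
  fix M
  have "(cmod (V (trunc M a) i - V a i))\<^sup>2 = (cmod (V a i - V (trunc M a) i))\<^sup>2"
    by (simp add: norm_minus_commute)
  also have "\<dots> \<le> K * N2 (\<lambda>n. a n - trunc M a n)" by (rule coord_cont[OF assms H2_trunc])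
  finally show "(cmod (V (trunc M a) i - V a i))\<^sup>2 \<le> K * N2 (\<lambda>n. a n - trunc M a n)" .
qed

lemma hs_diff: assumes "a \<in> H2" "b \<in> H2"
  shows "h_ser V (\<lambda>n. a n - b n) k = h_ser V a k - h_ser V b k"
  using assms H2_shiftp Vdiff unfolding h_ser_def by (simp add: shiftp_diff)

lemma hs_trunc: "h_ser V (trunc M a) k = (\<Sum>j<M. a j * h_ser V (ee j) k)"
proof (induction M)
  case 0
  have "trunc 0 a = (\<lambda>_. 0)" by (simp add: trunc_def)
  moreover have "(shift ^^ p) (\<lambda>_. 0) = (\<lambda>_. 0)" for p
    by (induction p) (auto simp: shift_def)
  ultimately show ?case by (simp add: h_ser_def Vzero)
next
  case (Suc M)
  have e: "(shift ^^ p) (trunc (Suc M) a) = (\<lambda>n. (shift ^^ p) (trunc M a) n + a M * (shift ^^ p) (ee M) n)" for p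
    by (simp add: trunc_Suc shiftp_add shiftp_scal)
  have v: "V ((shift ^^ p) (trunc (Suc M) a)) i = V ((shift ^^ p) (trunc M a)) i + a M * V ((shift ^^ p) (ee M)) i" for p i
    unfolding e
    using Vadd[OF conjunct1[OF H2_shiftp[OF H2_trunc]] H2_scal[OF conjunct1[OF H2_shiftp[OF H2_ee]]]]
      Vscal[OF conjunct1[OF H2_shiftp[OF H2_ee]]] by simp
  show ?case using Suc v[of 0] v[of "nat (- k)"] unfolding h_ser_def by auto
qed


lemma conv_ee: "conv_coeff h (ee j) n = h (n - int j)"
  unfolding conv_coeff_def by (subst suminf_finite[of "{j}"]) (auto simp: ee_def)

lemma ee_nz: "ee j \<noteq> (\<lambda>_. 0)"
proof
  assume "ee j = (\<lambda>_. 0)"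
  then have "ee j j = 0" by simp
  then show False by (simp add: ee_def)
qed

lemma converse:
  assumes H: "\<forall>f\<in>H2. \<forall>g\<in>H2. f \<noteq> (\<lambda>_. 0) \<longrightarrow> g \<noteq> (\<lambda>_. 0) \<longrightarrow> sub_symbol_eq V f g"
  shows "toeplitz V"
proof -
  have hee: "h_ser V (ee j) n = h_ser V (ee 0) (n - int j)" for j n
  proof -
    have "sub_symbol_eq V (ee j) (ee 0)" using H H2_ee ee_nz by blast
    then have "conv_coeff (h_ser V (ee j)) (ee 0) n = conv_coeff (h_ser V (ee 0)) (ee j) n"
      unfolding sub_symbol_eq_def by blast
    then show ?thesis by (simp add: conv_ee)
  qed
  have T: "V (ee (Suc j)) (Suc i) = V (ee j) i" for i j
  proof -
    have "V (ee (Suc j)) (Suc i) = h_ser V (ee (Suc j)) (int (Suc i))" by (simp add: h_ser_def del: of_nat_Suc)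
    also have "\<dots> = h_ser V (ee 0) (int i - int j)" by (subst hee) simp
    also have "\<dots> = h_ser V (ee j) (int i)" by (subst hee[of j]) simp
    also have "\<dots> = V (ee j) i" by (simp add: h_ser_def)
    finally show ?thesis .
  qed
  show ?thesis unfolding toeplitz_def
  proof (intro ballI ext)
    fix a i assume a: "a \<in> H2"
    have fin: "V (shift (trunc M a)) (Suc i) = V (trunc M a) i" for M
      unfolding shift_trunc V_trunc sum.lessThan_Suc_shift
      by (simp add: shift_def T)
    have l1: "(\<lambda>M. V (trunc M a) i) \<longlonglongrightarrow> V a i" by (rule V_trunc_lim[OF a])
    have l2: "(\<lambda>M. V (shift (trunc M a)) (Suc i)) \<longlonglongrightarrow> V (shift a) (Suc i)"
    proof (rule sq_bound_tendsto[OF _ N2_tail[OF a] Kpos])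
      fix M
      have sa: "shift a \<in> H2" using H2_shift_N2 a by blast
      have st: "shift (trunc M a) \<in> H2" using H2_shift_N2 H2_trunc by blast
      have "(cmod (V (shift (trunc M a)) (Suc i) - V (shift a) (Suc i)))\<^sup>2
          = (cmod (V (shift a) (Suc i) - V (shift (trunc M a)) (Suc i)))\<^sup>2"
        by (simp add: norm_minus_commute)
      also have "\<dots> \<le> K * N2 (\<lambda>n. shift a n - shift (trunc M a) n)" by (rule coord_cont[OF sa st])
      also have "(\<lambda>n. shift a n - shift (trunc M a) n) = shift (\<lambda>n. a n - trunc M a n)"
        using shiftp_diff[of 1 a "trunc M a"] by simp
      also have "N2 \<dots> = N2 (\<lambda>n. a n - trunc M a n)"
        using H2_shift_N2 H2_diff[OF a H2_trunc] by blast
      finally show "(cmod (V (shift (trunc M a)) (Suc i) - V (shift a) (Suc i)))\<^sup>2 \<le> K * N2 (\<lambda>n. a n - trunc M a n)" .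
    qed
    have "V (shift a) (Suc i) = V a i"
      using LIMSEQ_unique[OF l2] l1 fin by simp
    then show "shift_adj (V (shift a)) i = V a i" by (simp add: shift_adj_def)
  qed
qed

end


locale top = bop +
  assumes Tz: "a \<in> H2 \<Longrightarrow> V (shift a) (Suc i) = V a i"
begin

lemma Tp: "a \<in> H2 \<Longrightarrow> V ((shift ^^ p) a) (i + p) = V a i"
proof (induction p arbitrary: i)
  case 0 then show ?case by simp
next
  case (Suc p)
  have "V ((shift ^^ Suc p) a) (i + Suc p) = V (shift ((shift ^^ p) a)) (Suc (i + p))" by simp
  also have "\<dots> = V ((shift ^^ p) a) (i + p)" by (rule Tz) (use H2_shiftp Suc in blast)
  finally show ?case using Suc by simp
qed

lemma HB: assumes a: "a \<in> H2"
  shows "(\<Sum>m<M. (cmod (h_ser V a (n - int m)))\<^sup>2) \<le> 2 * K * N2 a"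
proof -
  define A where "A = {m\<in>{..<M}. 0 \<le> n - int m}"
  define B where "B = {m\<in>{..<M}. n - int m < 0}"
  let ?f = "\<lambda>m. (cmod (h_ser V a (n - int m)))\<^sup>2"
  have split: "sum ?f {..<M} = sum ?f A + sum ?f B"
    by (subst sum.union_disjoint[symmetric]) (auto simp: A_def B_def intro: sum.cong)
  have sA: "sum ?f A \<le> K * N2 a"
  proof -
    let ?h = "\<lambda>m. nat (n - int m)"
    have "sum ?f A = sum (\<lambda>m. (cmod (V a (?h m)))\<^sup>2) A"
      by (intro sum.cong) (auto simp: A_def h_ser_def)
    also have "\<dots> = sum (\<lambda>i. (cmod (V a i))\<^sup>2) (?h ` A)"
      by (subst sum.reindex) (auto simp: A_def inj_on_def)
    also have "\<dots> \<le> N2 (V a)" by (rule partial_le_N2[OF VH2[OF a]]) (simp add: A_def)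
    also have "\<dots> \<le> K * N2 a" by (rule Vbd[OF a])
    finally show ?thesis .
  qed
  have sB: "sum ?f B \<le> K * N2 a"
  proof -
    define P where "P = nat (int M - n)"
    let ?h = "\<lambda>m. P - nat (int m - n)"
    have eqB: "h_ser V a (n - int m) = V ((shift ^^ P) a) (?h m)" if m: "m \<in> B" for m
    proof -
      define q where "q = nat (int m - n)"
      have qP: "q \<le> P" using m by (auto simp: B_def P_def q_def)
      have "h_ser V a (n - int m) = V ((shift ^^ q) a) 0"
        using m by (auto simp: B_def h_ser_def q_def)
      also have "\<dots> = V ((shift ^^ (P - q)) ((shift ^^ q) a)) (0 + (P - q))"
        by (rule Tp[symmetric]) (use H2_shiftp a in blast)
      also have "(shift ^^ (P - q)) ((shift ^^ q) a) = (shift ^^ P) a"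
      proof -
        have "(shift ^^ (P - q)) ((shift ^^ q) a) = (shift ^^ (P - q + q)) a" by (simp add: funpow_add)
        then show ?thesis using qP by simp
      qed
      finally show ?thesis by (simp add: q_def)
    qed
    have "sum ?f B = sum (\<lambda>m. (cmod (V ((shift ^^ P) a) (?h m)))\<^sup>2) B"
      by (intro sum.cong) (auto simp: eqB)
    also have "\<dots> = sum (\<lambda>i. (cmod (V ((shift ^^ P) a) i))\<^sup>2) (?h ` B)"
    proof (subst sum.reindex)
      show "inj_on ?h B"
      proof (rule inj_onI)
        fix x y assume "x \<in> B" "y \<in> B" "?h x = ?h y"
        then show "x = y" by (auto simp: B_def P_def)
      qed
    qed simp
    also have "\<dots> \<le> N2 (V ((shift ^^ P) a))"
      by (rule partial_le_N2[OF VH2]) (use H2_shiftp a in \<open>auto simp: B_def\<close>)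
    also have "\<dots> \<le> K * N2 ((shift ^^ P) a)" by (rule Vbd) (use H2_shiftp a in blast)
    also have "\<dots> = K * N2 a" using H2_shiftp a by simp
    finally show ?thesis .
  qed
  show ?thesis using split sA sB by simp
qed

lemma HB_sum: assumes a: "a \<in> H2"
  shows "summable (\<lambda>m. (cmod (h_ser V a (n - int m)))\<^sup>2)"
    "(\<Sum>m. (cmod (h_ser V a (n - int m)))\<^sup>2) \<le> 2 * K * N2 a"
proof -
  show s: "summable (\<lambda>m. (cmod (h_ser V a (n - int m)))\<^sup>2)"
    by (rule summableI_nonneg_bounded[OF _ HB[OF a]]) simp
  show "(\<Sum>m. (cmod (h_ser V a (n - int m)))\<^sup>2) \<le> 2 * K * N2 a"
    by (rule suminf_le_const[OF s HB[OF a]])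
qed

lemma hs_coord: assumes a: "a \<in> H2" shows "(cmod (h_ser V a (k::int)))\<^sup>2 \<le> 2 * K * N2 a"
  using HB[OF a, where M=1 and n=k] by simp

lemma hs_lim: assumes a: "a \<in> H2" shows "(\<lambda>M. h_ser V (trunc M a) (k::int)) \<longlonglongrightarrow> h_ser V a k"
proof (rule sq_bound_tendsto[OF _ N2_tail[OF a]])
  fix M
  have "(cmod (h_ser V (trunc M a) k - h_ser V a k))\<^sup>2 = (cmod (h_ser V a k - h_ser V (trunc M a) k))\<^sup>2"
    by (simp add: norm_minus_commute)
  also have "\<dots> = (cmod (h_ser V (\<lambda>n. a n - trunc M a n) k))\<^sup>2" by (simp add: hs_diff[OF a H2_trunc])
  also have "\<dots> \<le> 2 * K * N2 (\<lambda>n. a n - trunc M a n)" by (rule hs_coord[OF H2_diff[OF a H2_trunc]])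
  finally show "(cmod (h_ser V (trunc M a) k - h_ser V a k))\<^sup>2 \<le> (2 * K) * N2 (\<lambda>n. a n - trunc M a n)" by simp
qed (use Kpos in simp)


lemma T_ee: "V (ee (j + p)) (i + p) = V (ee j) i"
  using Tp[OF H2_ee, of p j i] by (simp add: shiftp_ee)

lemma hs_ee: "h_ser V (ee l) k = h_ser V (ee 0) (k - int l)"
proof (cases "0 \<le> k")
  case True
  then obtain i where k: "k = int i" using nonneg_int_cases by blast
  show ?thesis
  proof (cases "l \<le> i")
    case True
    have e: "k - int l = int (i - l)" using True k by simp
    have "h_ser V (ee 0) (k - int l) = V (ee 0) (i - l)" unfolding e h_ser_def by simp
    also have "\<dots> = V (ee (0 + l)) ((i - l) + l)" by (rule T_ee[symmetric])
    also have "\<dots> = V (ee l) i" using True by simp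
    also have "\<dots> = h_ser V (ee l) k" unfolding k h_ser_def by simp
    finally show ?thesis ..
  next
    case False
    have e: "k - int l = - int (l - i)" using False k by simp
    have "h_ser V (ee 0) (k - int l) = V ((shift ^^ (l - i)) (ee 0)) 0"
    proof -
      have n: "nat (int l - int i) = l - i" by auto
      show ?thesis unfolding e h_ser_def using False by (simp add: n)
    qed
    also have "\<dots> = V (ee (l - i)) 0" by (simp add: shiftp_ee)
    also have "\<dots> = V (ee ((l - i) + i)) (0 + i)" by (rule T_ee[symmetric])
    also have "\<dots> = V (ee l) i" using False by simp
    also have "\<dots> = h_ser V (ee l) k" unfolding k h_ser_def by simp
    finally show ?thesis ..
  qed
next
  case False
  define i where "i = nat (- k)"
  have k: "k = - int i" using False by (simp add: i_def)
  have ip: "0 < i" using False by (simp add: i_def)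
  have e: "k - int l = - int (l + i)" using k by simp
  have "h_ser V (ee l) k = V ((shift ^^ i) (ee l)) 0" unfolding k h_ser_def using ip by simp
  also have "\<dots> = V (ee (l + i)) 0" by (simp add: shiftp_ee)
  also have "\<dots> = V ((shift ^^ (l + i)) (ee 0)) 0" by (simp add: shiftp_ee)
  also have "\<dots> = h_ser V (ee 0) (k - int l)"
  proof -
    have n: "nat (int i + int l) = l + i" by auto
    show ?thesis unfolding e h_ser_def using ip by (simp add: n)
  qed
  finally show ?thesis .
qed

lemma hs_trunc_c: "h_ser V (trunc M a) k = (\<Sum>j<M. a j * h_ser V (ee 0) (k - int j))"
  by (simp add: hs_trunc hs_ee[of _ k])

lemma conv_trunc: "conv_coeff h (trunc N g) n = (\<Sum>m<N. h (n - int m) * g m)"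
  unfolding conv_coeff_def by (subst suminf_finite[of "{..<N}"]) (auto simp: trunc_def)

lemma Bfin: "conv_coeff (h_ser V (trunc M f)) (trunc N g) n = conv_coeff (h_ser V (trunc N g)) (trunc M f) n"
proof -
  let ?c = "h_ser V (ee 0)"
  have "conv_coeff (h_ser V (trunc M f)) (trunc N g) n = (\<Sum>m<N. (\<Sum>l<M. f l * ?c (n - int m - int l)) * g m)"
    unfolding conv_trunc hs_trunc_c ..
  also have "\<dots> = (\<Sum>m<N. \<Sum>l<M. f l * g m * ?c (n - int m - int l))"
    unfolding sum_distrib_right by (intro sum.cong refl) (simp only: mult.assoc mult.commute mult.left_commute)
  also have "\<dots> = (\<Sum>l<M. \<Sum>m<N. f l * g m * ?c (n - int m - int l))"
    by (rule sum.swap)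
  also have "\<dots> = (\<Sum>l<M. \<Sum>m<N. g m * ?c (n - int l - int m) * f l)"
  proof (intro sum.cong refl)
    fix l m
    have "n - int m - int l = n - int l - int m" by simp
    then show "f l * g m * ?c (n - int m - int l) = g m * ?c (n - int l - int m) * f l"
      by (simp only: mult.assoc mult.commute mult.left_commute)
  qed
  also have "\<dots> = (\<Sum>l<M. (\<Sum>m<N. g m * ?c (n - int l - int m)) * f l)"
    unfolding sum_distrib_right ..
  also have "\<dots> = conv_coeff (h_ser V (trunc N g)) (trunc M f) n"
    unfolding conv_trunc hs_trunc_c ..
  finally show ?thesis .
qed

lemma Bsum: assumes "f \<in> H2" "g \<in> H2"
  shows "summable (\<lambda>m. cmod (h_ser V f (n - int m) * g m))"
    "(cmod (conv_coeff (h_ser V f) g n))\<^sup>2 \<le> 2 * K * N2 f * N2 g"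
proof -
  have sg: "summable (\<lambda>m. (cmod (g m))\<^sup>2)" using assms H2_iff by auto
  show "summable (\<lambda>m. cmod (h_ser V f (n - int m) * g m))"
    by (rule CS(1)[OF HB_sum(1)[OF assms(1)] sg])
  have "(cmod (conv_coeff (h_ser V f) g n))\<^sup>2 \<le> (\<Sum>m. (cmod (h_ser V f (n - int m)))\<^sup>2) * N2 g"
    unfolding conv_coeff_def N2_def by (rule CS(2)[OF HB_sum(1)[OF assms(1)] sg])
  also have "\<dots> \<le> 2 * K * N2 f * N2 g"
    by (rule mult_right_mono[OF HB_sum(2)[OF assms(1)] N2_nonneg[OF assms(2)]])
  finally show "(cmod (conv_coeff (h_ser V f) g n))\<^sup>2 \<le> 2 * K * N2 f * N2 g" .
qed

lemma Bconv: assumes "f \<in> H2" "g \<in> H2"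
  shows "(\<lambda>N. \<Sum>m<N. h_ser V f (n - int m) * g m) \<longlonglongrightarrow> conv_coeff (h_ser V f) g n"
  unfolding conv_coeff_def
  by (rule summable_LIMSEQ[OF summable_norm_cancel[OF Bsum(1)[OF assms]]])

lemma Bdiff: assumes "f \<in> H2" "f' \<in> H2" "g \<in> H2"
  shows "conv_coeff (h_ser V f) g n - conv_coeff (h_ser V f') g n = conv_coeff (h_ser V (\<lambda>k. f k - f' k)) g n"
  unfolding conv_coeff_def hs_diff[OF assms(1,2)]
  by (simp add: left_diff_distrib suminf_diff[OF summable_norm_cancel[OF Bsum(1)[OF assms(1,3)]]
        summable_norm_cancel[OF Bsum(1)[OF assms(2,3)]]])

lemma Bsym: assumes f: "f \<in> H2" and g: "g \<in> H2"
  shows "conv_coeff (h_ser V f) g n = conv_coeff (h_ser V g) f n"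
proof -
  have A: "conv_coeff (h_ser V f) (trunc N g) n = conv_coeff (h_ser V (trunc N g)) f n" for N
  proof -
    have l1: "(\<lambda>M. \<Sum>m<N. h_ser V (trunc M f) (n - int m) * g m) \<longlonglongrightarrow> conv_coeff (h_ser V f) (trunc N g) n"
      unfolding conv_trunc by (intro tendsto_intros hs_lim[OF f])
    have "(\<lambda>M. \<Sum>m<M. h_ser V (trunc N g) (n - int m) * f m) \<longlonglongrightarrow> conv_coeff (h_ser V (trunc N g)) f n"
      by (rule Bconv[OF H2_trunc f])
    moreover have "(\<Sum>m<M. h_ser V (trunc N g) (n - int m) * f m) = (\<Sum>m<N. h_ser V (trunc M f) (n - int m) * g m)" for M
      using Bfin[of M f N g n] by (simp add: conv_trunc)
    ultimately have l2: "(\<lambda>M. \<Sum>m<N. h_ser V (trunc M f) (n - int m) * g m) \<longlonglongrightarrow> conv_coeff (h_ser V (trunc N g)) f n"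
      by simp
    show ?thesis using LIMSEQ_unique[OF l1 l2] .
  qed
  have l1: "(\<lambda>N. conv_coeff (h_ser V f) (trunc N g) n) \<longlonglongrightarrow> conv_coeff (h_ser V f) g n"
    unfolding conv_trunc by (rule Bconv[OF f g])
  have l2: "(\<lambda>N. conv_coeff (h_ser V (trunc N g)) f n) \<longlonglongrightarrow> conv_coeff (h_ser V g) f n"
  proof (rule sq_bound_tendsto[where c = "2 * K * N2 f", OF _ N2_tail[OF g]])
    fix N
    have "(cmod (conv_coeff (h_ser V (trunc N g)) f n - conv_coeff (h_ser V g) f n))\<^sup>2
        = (cmod (conv_coeff (h_ser V g) f n - conv_coeff (h_ser V (trunc N g)) f n))\<^sup>2"
      by (simp add: norm_minus_commute)
    also have "\<dots> = (cmod (conv_coeff (h_ser V (\<lambda>k. g k - trunc N g k)) f n))\<^sup>2"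
      unfolding Bdiff[OF g H2_trunc f] ..
    also have "\<dots> \<le> 2 * K * N2 (\<lambda>k. g k - trunc N g k) * N2 f"
      by (rule Bsum(2)[OF H2_diff[OF g H2_trunc] f])
    also have "\<dots> = 2 * K * N2 f * N2 (\<lambda>k. g k - trunc N g k)"
      by (simp only: mult.assoc mult.commute mult.left_commute)
    finally show "(cmod (conv_coeff (h_ser V (trunc N g)) f n - conv_coeff (h_ser V g) f n))\<^sup>2
        \<le> 2 * K * N2 f * N2 (\<lambda>k. g k - trunc N g k)" .
  qed (use Kpos N2_nonneg[OF f] in simp)
  have l3: "(\<lambda>N. conv_coeff (h_ser V f) (trunc N g) n) \<longlonglongrightarrow> conv_coeff (h_ser V g) f n"
    unfolding A by (rule l2)
  show ?thesis by (rule LIMSEQ_unique[OF l1 l3])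
qed

lemma forward: assumes "f \<in> H2" "g \<in> H2" shows "sub_symbol_eq V f g"
  unfolding sub_symbol_eq_def conv_ok_def
proof (intro allI conjI)
  fix n
  show "summable (\<lambda>m. cmod (h_ser V f (n - int m) * g m))" by (rule Bsum(1)[OF assms])
  show "summable (\<lambda>m. cmod (h_ser V g (n - int m) * f m))" by (rule Bsum(1)[OF assms(2,1)])
  show "conv_coeff (h_ser V f) g n = conv_coeff (h_ser V g) f n" by (rule Bsym[OF assms])
qed

end


lemma bop_exists: assumes "bounded_op_H2 V" shows "\<exists>K. bop V K"
proof -
  obtain C where C: "\<And>a. a \<in> H2 \<Longrightarrow> h2_norm (V a) \<le> C * h2_norm a"
    using assms unfolding bounded_op_H2_def by blast
  have "bop V (C\<^sup>2)"
  proof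
    fix a assume a: "a \<in> H2"
    have hn: "h2_norm b = sqrt (N2 b)" for b by (simp add: h2_norm_def N2_def)
    have Va: "V a \<in> H2" using assms a by (simp add: bounded_op_H2_def)
    have "N2 (V a) = (h2_norm (V a))\<^sup>2"
      using N2_nonneg[OF Va] unfolding hn by simp
    also have "\<dots> \<le> (C * h2_norm a)\<^sup>2" by (rule power_mono[OF C[OF a]]) (simp add: hn N2_nonneg[OF Va])
    also have "\<dots> = C\<^sup>2 * N2 a" using N2_nonneg[OF a] by (simp add: hn power_mult_distrib)
    finally show "N2 (V a) \<le> C\<^sup>2 * N2 a" .
  qed (use assms in \<open>auto simp: bounded_op_H2_def\<close>)
  then show ?thesis by blast
qed

theorem proposition2:
  assumes "bounded_op_H2 V"
  shows "toeplitz V \<longleftrightarrow>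
    (\<forall>f\<in>H2. \<forall>g\<in>H2. f \<noteq> (\<lambda>_. 0) \<longrightarrow> g \<noteq> (\<lambda>_. 0) \<longrightarrow> sub_symbol_eq V f g)"
proof -
  obtain K where b: "bop V K" using bop_exists[OF assms] by blast
  interpret bop V K by (rule b)
  show ?thesis
  proof
    assume t: "toeplitz V"
    have tz: "V (shift a) (Suc i) = V a i" if "a \<in> H2" for a i
    proof -
      have "shift_adj (V (shift a)) = V a" using t that unfolding toeplitz_def by blast
      then have "shift_adj (V (shift a)) i = V a i" by simp
      then show "V (shift a) (Suc i) = V a i" by (simp add: shift_adj_def)
    qed
    interpret top V K by (rule top.intro[OF b top_axioms.intro[of V, OF tz]])
    show "\<forall>f\<in>H2. \<forall>g\<in>H2. f \<noteq> (\<lambda>_. 0) \<longrightarrow> g \<noteq> (\<lambda>_. 0) \<longrightarrow> sub_symbol_eq V f g"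
    proof (intro ballI impI)
      fix f g assume "f \<in> H2" "g \<in> H2"
      then show "sub_symbol_eq V f g" by (rule forward)
    qed
  next
    assume "\<forall>f\<in>H2. \<forall>g\<in>H2. f \<noteq> (\<lambda>_. 0) \<longrightarrow> g \<noteq> (\<lambda>_. 0) \<longrightarrow> sub_symbol_eq V f g"
    then show "toeplitz V" by (rule converse)
  qed
qed

end
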